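(* Let $u_1,\ldots,u_m$ be a sequence of squarefree monomials of the same degree having linear quotient order. Then any proliferation of this sequence again has linear quotient order.
   Context: A sequence $u_1,\ldots,u_m$ of monomials of the same degree has linear quotient order if the ideal $(u_1,\ldots,u_{j-1}):u_j$ is generated by variables for every $j=2,\ldots,m$. Proliferation: fix a variable $x_i$ and new variables $x_{i1},\ldots,x_{ir}$. For each $j$ with $x_i\mid u_j$ set $u_{jk}=x_{ik}(u_j/x_i)$ for $k=1,\ldots,r$ (i.e. $x_i$ replaced by $x_{ik}$). The proliferation of $u_1,\ldots,u_m$ (with respect to $x_i$ and $x_{i1},\ldots,x_{ir}$) is the sequence obtained from $u_1,\ldots,u_m$ by replacing each $u_j$ divisible by $x_i$ with the consecutive block $u_{j1},\ldots,u_{jr}$, keeping the other $u_j$ unchanged and in place. *)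

theory Defs
  imports "HOL-Library.Multiset"
begin

text \<open>Monomials in the variables of type 'v are modelled as finite multisets of
variables (exponent vector = multiplicities). Divisibility of monomials is
sub-multiset inclusion, the product is multiset sum, the degree is the size.
A monomial ideal is determined by the monomials it contains, so ideals are
represented by their sets of monomials.\<close>

definition squarefree_mon :: "'v multiset \<Rightarrow> bool" where
  "squarefree_mon u \<longleftrightarrow> (\<forall>x. count u x \<le> 1)"

definition mideal :: "'v multiset set \<Rightarrow> 'v multiset set" where
  "mideal S = {w. \<exists>s\<in>S. s \<subseteq># w}"

definition mcolon :: "'v multiset set \<Rightarrow> 'v multiset \<Rightarrow> 'v multiset set" where
  "mcolon I u = {w. w + u \<in> I}"

definition generated_by_vars :: "'v multiset set \<Rightarrow> bool" where
  "generated_by_vars I \<longleftrightarrow> (\<exists>V. I = mideal ((\<lambda>x. {#x#}) ` V))"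

text \<open>Linear quotient order of the sequence us = [u_1,...,u_m] (0-indexed here):
for every j = 2..m, (u_1,...,u_{j-1}) : u_j is generated by variables.\<close>
definition linear_quotient_order :: "'v multiset list \<Rightarrow> bool" where
  "linear_quotient_order us \<longleftrightarrow>
     (\<forall>j. 1 \<le> j \<and> j < length us \<longrightarrow>
        generated_by_vars (mcolon (mideal (set (take j us))) (us ! j)))"

definition proliferation :: "'v \<Rightarrow> 'v list \<Rightarrow> 'v multiset list \<Rightarrow> 'v multiset list" where
  "proliferation x ys us =
     concat (map (\<lambda>u. if x \<in># u then map (\<lambda>y. add_mset y (u - {#x#})) ys else [u]) us)"

end

theory Submission
  imports Defs
begin

definition QC :: "'v multiset set \<Rightarrow> 'v multiset \<Rightarrow> bool" where
  "QC S u \<longleftrightarrow> (\<forall>s\<in>S. \<exists>v. v \<in># s - u \<and> (\<exists>t\<in>S. t - u = {#v#}))"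

lemma colon_eq: "mcolon (mideal S) u = mideal ((\<lambda>s. s - u) ` S)"
  unfolding mcolon_def mideal_def by (auto simp: subset_eq_diff_conv add.commute)

lemma gbv_iff: "generated_by_vars (mideal D) \<longleftrightarrow> (\<forall>s\<in>D. \<exists>v. v \<in># s \<and> {#v#} \<in> D)"
proof
  assume "generated_by_vars (mideal D)"
  then obtain V where V: "mideal D = mideal ((\<lambda>x. {#x#}) ` V)"
    unfolding generated_by_vars_def by blast
  have nE: "{#} \<notin> D"
  proof
    assume "{#} \<in> D"
    then have "{#} \<in> mideal D" unfolding mideal_def by auto
    then have "{#} \<in> mideal ((\<lambda>x. {#x#}) ` V)" using V by simp
    then show False unfolding mideal_def by auto
  qed
  show "\<forall>s\<in>D. \<exists>v. v \<in># s \<and> {#v#} \<in> D"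
  proof
    fix s assume s: "s \<in> D"
    then have "s \<in> mideal D" unfolding mideal_def by auto
    then have "s \<in> mideal ((\<lambda>x. {#x#}) ` V)" using V by simp
    then obtain v where v: "v \<in> V" "{#v#} \<subseteq># s" unfolding mideal_def by blast
    have "{#v#} \<in> mideal ((\<lambda>x. {#x#}) ` V)" using v(1) unfolding mideal_def by blast
    then have "{#v#} \<in> mideal D" using V by simp
    then obtain t where t: "t \<in> D" "t \<subseteq># {#v#}" unfolding mideal_def by blast
    have "t \<noteq> {#}" using nE t(1) by auto
    then have "t = {#v#}" using t(2) by (rule nonempty_subseteq_mset_eq_single)
    moreover have "v \<in># s" using v(2) by (simp add: mset_subset_eq_single)
    ultimately show "\<exists>v. v \<in># s \<and> {#v#} \<in> D" using t(1) by blast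
  qed
next
  assume H: "\<forall>s\<in>D. \<exists>v. v \<in># s \<and> {#v#} \<in> D"
  have "mideal D = mideal ((\<lambda>x. {#x#}) ` {v. {#v#} \<in> D})"
  proof (rule set_eqI, rule iffI)
    fix w assume "w \<in> mideal D"
    then obtain s where s: "s \<in> D" "s \<subseteq># w" unfolding mideal_def by auto
    then obtain v where "v \<in># s" "{#v#} \<in> D" using H by blast
    with s show "w \<in> mideal ((\<lambda>x. {#x#}) ` {v. {#v#} \<in> D})"
      unfolding mideal_def by (auto intro!: bexI[of _ "{#v#}"] dest: mset_subset_eqD)
  next
    fix w assume "w \<in> mideal ((\<lambda>x. {#x#}) ` {v. {#v#} \<in> D})"
    then obtain v where "{#v#} \<in> D" "{#v#} \<subseteq># w" unfolding mideal_def by blast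
    then show "w \<in> mideal D" unfolding mideal_def by blast
  qed
  then show "generated_by_vars (mideal D)" unfolding generated_by_vars_def by blast
qed

lemma gbv_QC: "generated_by_vars (mcolon (mideal S) u) \<longleftrightarrow> QC S u"
  unfolding colon_eq gbv_iff QC_def by (simp add: image_iff eq_commute)

lemma lqo_split: "linear_quotient_order L \<longleftrightarrow>
   (\<forall>as u bs. L = as @ u # bs \<and> as \<noteq> [] \<longrightarrow> QC (set as) u)"
proof
  assume H: "linear_quotient_order L"
  show "\<forall>as u bs. L = as @ u # bs \<and> as \<noteq> [] \<longrightarrow> QC (set as) u"
  proof (intro allI impI)
    fix as u bs assume A: "L = as @ u # bs \<and> as \<noteq> []"
    then have "1 \<le> length as" "length as < length L" by (auto simp: Suc_le_eq)
    with H have "generated_by_vars (mcolon (mideal (set (take (length as) L))) (L ! length as))"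
      unfolding linear_quotient_order_def by blast
    with A show "QC (set as) u" by (simp add: gbv_QC)
  qed
next
  assume H: "\<forall>as u bs. L = as @ u # bs \<and> as \<noteq> [] \<longrightarrow> QC (set as) u"
  show "linear_quotient_order L" unfolding linear_quotient_order_def
  proof (intro allI impI)
    fix j assume j: "1 \<le> j \<and> j < length L"
    have "L = take j L @ L ! j # drop (Suc j) L" using j by (simp add: id_take_nth_drop)
    moreover have "take j L \<noteq> []" using j by auto
    ultimately have "QC (set (take j L)) (L ! j)" using H by blast
    then show "generated_by_vars (mcolon (mideal (set (take j L))) (L ! j))" by (simp add: gbv_QC)
  qed
qed

lemma concat_split:
  "concat xss = A @ w # B \<Longrightarrow>
   \<exists>xs1 xs c1 c2 xs2. xss = xs1 @ xs # xs2 \<and> xs = c1 @ w # c2 \<and> A = concat xs1 @ c1"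
proof (induction xss arbitrary: A)
  case Nil then show ?case by simp
next
  case (Cons ys yss)
  from Cons.prems have "ys @ concat yss = A @ w # B" by simp
  then obtain us where us: "(ys = A @ us \<and> us @ concat yss = w # B) \<or> (ys @ us = A \<and> concat yss = us @ w # B)"
    unfolding append_eq_append_conv2 by blast
  show ?case
  proof (cases "ys @ us = A \<and> concat yss = us @ w # B")
    case True
    from Cons.IH[of us] True obtain xs1 xs c1 c2 xs2 where
      "yss = xs1 @ xs # xs2 \<and> xs = c1 @ w # c2 \<and> us = concat xs1 @ c1" by blast
    then have "ys # yss = (ys # xs1) @ xs # xs2 \<and> xs = c1 @ w # c2 \<and> A = concat (ys # xs1) @ c1"
      using True by simp
    then show ?thesis by blast
  next
    case False
    with us have F: "ys = A @ us" "us @ concat yss = w # B" by auto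
    show ?thesis
    proof (cases us)
      case Nil
      then have "concat yss = [] @ w # B" using F by simp
      from Cons.IH[OF this] obtain xs1 xs c1 c2 xs2 where
        "yss = xs1 @ xs # xs2 \<and> xs = c1 @ w # c2 \<and> [] = concat xs1 @ c1" by blast
      then have "ys # yss = (ys # xs1) @ xs # xs2 \<and> xs = c1 @ w # c2 \<and> A = concat (ys # xs1) @ c1"
        using F Nil by simp
      then show ?thesis by blast
    next
      case (Cons z zs)
      then have "ys = A @ w # zs" using F by simp
      then have "ys # yss = [] @ ys # yss \<and> ys = A @ w # zs \<and> A = concat [] @ A" by simp
      then show ?thesis
        by (rule exI[where x="[]", OF exI[where x=ys, OF exI[where x=A, OF exI[where x=zs, OF exI[where x=yss]]]]])
    qed
  qed
qed


lemma sqD: "squarefree_mon s \<Longrightarrow> count s z \<le> 1"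
  unfolding squarefree_mon_def by auto

lemma caseB1:
  assumes "squarefree_mon s" "x \<in># u" "y \<notin># s" "v \<in># s - u"
  shows "v \<noteq> x" "v \<in># add_mset y' (s - {#x#}) - add_mset y (u - {#x#})"
    "v \<in># s - add_mset y (u - {#x#})"
proof -
  have a: "count s x \<le> 1" using sqD[OF assms(1)] .
  have b1: "count u x \<ge> 1" using assms(2) by (simp add: Suc_le_eq)
  have b2: "count s y = 0" using assms(3) by (simp add: not_in_iff)
  have b3: "count s v > count u v" using assms(4) by (simp add: in_diff_count)
  show vx: "v \<noteq> x"
  proof
    assume "v = x"
    with b3 have "count u x < count s x" by simp
    with a b1 show False by linarith
  qed
  have vy: "v \<noteq> y" using b2 b3 by auto
  show "v \<in># add_mset y' (s - {#x#}) - add_mset y (u - {#x#})"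
    using b3 vx vy by (simp add: in_diff_count)
  show "v \<in># s - add_mset y (u - {#x#})"
    using b3 vx vy by (simp add: in_diff_count)
qed

lemma caseA1:
  assumes "x \<notin># u" "v \<in># s - u" "v \<noteq> x" "t - u = {#v#}"
  shows "v \<in># add_mset y' (s - {#x#}) - u" "x \<notin># t"
proof -
  have c: "count (t - u) x = 0" using assms(3,4) by simp
  have b3: "count s v > count u v" using assms(2) by (simp add: in_diff_count)
  show "v \<in># add_mset y' (s - {#x#}) - u" using b3 assms(3) by (simp add: in_diff_count)
  show "x \<notin># t" using c assms(1) by (simp add: not_in_iff)
qed

lemma caseA2:
  assumes "x \<notin># u" "y' \<notin># u" "t - u = {#x#}"
  shows "y' \<in># add_mset y' (s - {#x#}) - u" "x \<in># t" "add_mset y' (t - {#x#}) - u = {#y'#}"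
proof -
  have c: "count (t - u) x = 1" using assms(3) by simp
  have u0: "count u x = 0" "count u y' = 0" using assms(1,2) by (simp_all add: not_in_iff)
  show "y' \<in># add_mset y' (s - {#x#}) - u" using u0 by (simp add: in_diff_count)
  show xt: "x \<in># t"
  proof (rule ccontr)
    assume "x \<notin># t"
    then have "count t x = 0" by (simp add: not_in_iff)
    with c show False by simp
  qed
  have cz: "\<And>z. count t z - count u z = (if z = x then 1 else 0)"
    using assms(3) by (metis count_diff count_single)
  have tx: "count t x \<ge> 1" using xt by (simp add: Suc_le_eq)
  show "add_mset y' (t - {#x#}) - u = {#y'#}"
    unfolding multiset_eq_iff
  proof
    fix z
    show "count (add_mset y' (t - {#x#}) - u) z = count {#y'#} z"
      using cz[of z] u0 tx by (cases "z = x"; cases "z = y'"; simp)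
  qed
qed

lemma dd1: "x \<in># u \<Longrightarrow> add_mset y (t - {#x#}) - add_mset y (u - {#x#}) = t - u"
  by (auto simp: multiset_eq_iff Suc_le_eq)

lemma dd2: "x \<notin># t \<Longrightarrow> y \<notin># t \<Longrightarrow> t - add_mset y (u - {#x#}) = t - u"
  by (auto simp: multiset_eq_iff not_in_iff)

lemma caseB2:
  assumes "x \<in># u" "y \<notin># t" "t - u = {#v#}"
  shows "(if x \<in># t then add_mset y (t - {#x#}) else t) - add_mset y (u - {#x#}) = {#v#}"
proof (cases "x \<in># t")
  case True
  show ?thesis unfolding if_P[OF True] by (rule trans[OF dd1[OF assms(1)] assms(3)])
next
  case False
  show ?thesis unfolding if_not_P[OF False] by (rule trans[OF dd2[OF False assms(2)] assms(3)])
qed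

lemma caseC:
  assumes "yl \<noteq> yk" "yl \<notin># u" "x \<in># u"
  shows "add_mset yl (u - {#x#}) - add_mset yk (u - {#x#}) = {#yl#}"
  using assms by (auto simp: multiset_eq_iff not_in_iff)

theorem lemma5p1:
  fixes us :: "'v multiset list" and d :: nat and x :: 'v and ys :: "'v list"
  assumes "\<forall>u\<in>set us. squarefree_mon u"
    and "\<forall>u\<in>set us. size u = d"
    and "linear_quotient_order us"
    and "ys \<noteq> []"
    and "distinct ys"
    and "x \<notin> set ys"
    and "\<forall>u\<in>set us. \<forall>y\<in>set ys. y \<notin># u"
  shows "linear_quotient_order (proliferation x ys us)"
proof -
  define g where "g = (\<lambda>u y. add_mset y (u - {#x#}))"
  define f where "f = (\<lambda>u. if x \<in># u then map (g u) ys else [u])"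
  have Pf: "proliferation x ys us = concat (map f us)"
    unfolding proliferation_def f_def g_def by simp
  have setf: "\<And>s. set (f s) = (if x \<in># s then g s ` set ys else {s})"
    unfolding f_def by auto
  have sq: "\<And>s. s \<in> set us \<Longrightarrow> squarefree_mon s" using assms(1) by auto
  have ny: "\<And>s y. s \<in> set us \<Longrightarrow> y \<in> set ys \<Longrightarrow> y \<notin># s" using assms(7) by auto
  show ?thesis unfolding lqo_split Pf
  proof (intro allI impI)
    fix A w B assume AB: "concat (map f us) = A @ w # B \<and> A \<noteq> []"
    from concat_split[OF conjunct1[OF AB]] obtain xss1 xs c1 c2 xss2 where
      sp: "map f us = xss1 @ xs # xss2" "xs = c1 @ w # c2" "A = concat xss1 @ c1"
      by (elim exE conjE) (rule that)
    from sp(1) obtain us1 vs where uv: "us = us1 @ vs" "xss1 = map f us1" "xs # xss2 = map f vs"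
      unfolding map_eq_append_conv by (elim exE conjE) (rule that)
    from uv(3) obtain u us2 where uu: "vs = u # us2" "xs = f u"
      unfolding Cons_eq_map_conv by (elim exE conjE) (rule that)
    have usp: "us = us1 @ u # us2" "map f us1 = xss1" "f u = xs" using uv uu by simp_all
    have uin: "u \<in> set us" using usp(1) by simp
    have us1in: "set us1 \<subseteq> set us" using usp(1) by auto
    have setA: "set A = (\<Union>s\<in>set us1. set (f s)) \<union> set c1" using sp(3) usp(2) by auto
    have Q: "us1 \<noteq> [] \<Longrightarrow> QC (set us1) u"
      using assms(3)[unfolded lqo_split, rule_format, of us1 u us2] usp(1) by blast
    show "QC (set A) w" unfolding QC_def
    proof
      fix s' assume s'A: "s' \<in> set A"
      show "\<exists>v. v \<in># s' - w \<and> (\<exists>t\<in>set A. t - w = {#v#})"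
      proof (cases "x \<in># u")
        case False
        then have "f u = [u]" unfolding f_def by simp
        then have cu: "c1 @ w # c2 = [u]" using sp usp by simp
        then have c1e: "c1 = []" by (cases c1) auto
        with cu have wu: "w = u" by simp
        from c1e obtain s where s: "s \<in> set us1" "s' \<in> set (f s)" using s'A setA by auto
        then have "us1 \<noteq> []" by auto
        with Q s(1) obtain v t where vt: "v \<in># s - u" "t \<in> set us1" "t - u = {#v#}"
          unfolding QC_def by blast
        have tA: "set (f t) \<subseteq> set A" using vt(2) setA by auto
        show ?thesis
        proof (cases "v = x")
          case False
          note A1 = caseA1[OF \<open>x \<notin># u\<close> vt(1) False vt(3)]
          have "t \<in> set (f t)" using A1(2) setf by simp
          moreover have "v \<in># s' - u" using s(2) A1(1) vt(1) setf[of s] g_def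
            by (auto split: if_splits)
          ultimately show ?thesis using tA vt(3) wu by blast
        next
          case True
          have xs: "x \<in># s" using vt(1) True by (meson in_diffD)
          then obtain y' where y': "y' \<in> set ys" "s' = g s y'" using s(2) setf[of s] by auto
          have y'u: "y' \<notin># u" using ny[OF uin y'(1)] .
          have tsq: "squarefree_mon t" using sq us1in vt(2) by auto
          note A2 = caseA2[OF \<open>x \<notin># u\<close> y'u vt(3)[unfolded True]]
          have "g t y' \<in> set (f t)" using A2(2) setf[of t] y'(1) by auto
          then show ?thesis using A2 tA y' wu g_def by blast
        qed
      next
        case True
        then have "map (g u) ys = c1 @ w # c2" using sp usp unfolding f_def by simp
        then obtain ys1 yk ys2 where ysp: "ys = ys1 @ yk # ys2" "map (g u) ys1 = c1" "w = g u yk"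
          by (auto simp: map_eq_append_conv Cons_eq_map_conv)
        have yk: "yk \<in> set ys" "yk \<notin> set ys1" using ysp assms(5) by auto
        have sqU: "squarefree_mon u" using sq uin .
        from s'A setA consider "s' \<in> set c1" | s where "s \<in> set us1" "s' \<in> set (f s)" by auto
        then show ?thesis
        proof cases
          case 1
          then obtain yl where yl: "yl \<in> set ys1" "s' = g u yl" using ysp by auto
          have "yl \<noteq> yk" using yl yk by auto
          moreover have "yl \<notin># u" using ny[OF uin] yl ysp by auto
          ultimately have "s' - w = {#yl#}" using caseC[OF _ _ True] yl ysp g_def by simp
          then show ?thesis using 1 setA by auto
        next
          case 2
          then have "us1 \<noteq> []" by auto
          with Q 2(1) obtain v t where vt: "v \<in># s - u" "t \<in> set us1" "t - u = {#v#}"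
            unfolding QC_def by blast
          have tA: "set (f t) \<subseteq> set A" using vt(2) setA by auto
          have ssq: "squarefree_mon s" "squarefree_mon t" using sq us1in 2(1) vt(2) by auto
          have yks: "yk \<notin># s" "yk \<notin># t" using ny us1in 2(1) vt(2) yk(1) by auto
          have yku: "yk \<notin># u" using ny[OF uin yk(1)] .
          note B1 = caseB1[OF ssq(1) True yks(1) vt(1)]
          note B2 = caseB2[OF True yks(2) vt(3)]
          have "v \<in># s' - w"
            using 2(2) B1(2,3) setf[of s] ysp(3) g_def by (auto split: if_splits)
          moreover have "(if x \<in># t then g t yk else t) \<in> set (f t)"
            using setf[of t] yk(1) by auto
          ultimately show ?thesis using B2 tA ysp(3) g_def by blast
        qed
      qed
    qed
  qed
qed

end
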